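(* Consider linear regression with label noise in the limit $N\to\infty$ with $D$ fixed. Then, for the stationary distribution of the parameter $\mathbf{w}$ with $\Sigma:=\mathbb{E}_{\mathbf{w}}[(\mathbf{w}-\mathbf{u})(\mathbf{w}-\mathbf{u})^{\mathrm T}]$, the averaged minibatch noise covariance is $$C:=\mathbb{E}_{\mathbf{w}}[C(\mathbf{w})]=\frac1S\big(A\Sigma A+\mathrm{Tr}[A\Sigma]\,A+\sigma^2A\big).$$
   Context: Data: $x_i\in\mathbb{R}^D$ i.i.d. $\mathcal N(0,A)$ with $A$ symmetric positive definite; labels $y_i=\mathbf{u}^{\mathrm T}x_i+\epsilon_i$ for a fixed $\mathbf{u}\in\mathbb{R}^D$, where the $\epsilon_i$ are i.i.d., independent of the $x_i$, with mean $0$ and variance $\sigma^2$. Per-sample loss $\ell_i(\mathbf{w})=\frac12(\mathbf{w}^{\mathrm T}x_i-y_i)^2$, $L(\mathbf{w})=\frac1N\sum_{i=1}^N\ell_i(\mathbf{w})$. For minibatch size $S$ the noise covariance is $C(\mathbf{w})=\frac{1}{SN}\sum_{i=1}^N\nabla\ell_i(\mathbf{w})\nabla\ell_i(\mathbf{w})^{\mathrm T}-\frac1S\nabla L(\mathbf{w})\nabla L(\mathbf{w})^{\mathrm T}$, and $C(\mathbf{w})$ is understood in the limit $N\to\infty$. The expectation $\mathbb{E}_{\mathbf{w}}$ is over the stationary distribution of the SGD parameter. *)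

theory Defs
  imports "HOL-Probability.Probability"
begin

definition outer :: "real^'n \<Rightarrow> real^'n \<Rightarrow> real^'n^'n" where
  "outer v w = (\<chi> i j. v $ i * w $ j)"

definition spd :: "real^'n^'n \<Rightarrow> bool" where
  "spd A \<longleftrightarrow> transpose A = A \<and> (\<forall>v. v \<noteq> 0 \<longrightarrow> v \<bullet> (A *v v) > 0)"

(* mu is the centred multivariate normal law N(0,A) on R^D:
   every linear functional t.x is N(0, t^T A t) *)
definition gaussian_vec :: "(real^'n) measure \<Rightarrow> real^'n^'n \<Rightarrow> bool" where
  "gaussian_vec \<mu> A \<longleftrightarrow> prob_space \<mu> \<and> sets \<mu> = sets borel \<and>
     (\<forall>t. t \<noteq> 0 \<longrightarrow>
        distributed \<mu> lborel (\<lambda>x. t \<bullet> x) (normal_density 0 (sqrt (t \<bullet> (A *v t)))))"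

(* per-sample gradient of l(w) = 1/2 (w^T x - y)^2 with y = u^T x + eps *)
definition grad_l :: "real^'n \<Rightarrow> real^'n \<Rightarrow> real^'n \<Rightarrow> real \<Rightarrow> real^'n" where
  "grad_l u w x eps = (w \<bullet> x - (u \<bullet> x + eps)) *\<^sub>R x"

(* N \<rightarrow> \<infinity> limit of the minibatch noise covariance
   C(w) = 1/(SN) sum_i g_i g_i^T - 1/S (grad L)(grad L)^T,
   i.e. the population version: 1/S (E[g g^T] - E[g] E[g]^T),
   where the sample (x, eps) is given by random variables X, Ep on M *)
definition noise_cov ::
  "'a measure \<Rightarrow> ('a \<Rightarrow> real^'n) \<Rightarrow> ('a \<Rightarrow> real) \<Rightarrow> real^'n \<Rightarrow> real \<Rightarrow> real^'n \<Rightarrow> real^'n^'n" where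
  "noise_cov M X Ep u S w =
     (1 / S) *\<^sub>R ((LINT \<omega>|M. outer (grad_l u w (X \<omega>) (Ep \<omega>)) (grad_l u w (X \<omega>) (Ep \<omega>)))
        - outer (LINT \<omega>|M. grad_l u w (X \<omega>) (Ep \<omega>)) (LINT \<omega>|M. grad_l u w (X \<omega>) (Ep \<omega>)))"

end

theory Submission imports Defs begin
lemma gauss_mom:
  fixes X :: "'a \<Rightarrow> real^'n"
  assumes P: "prob_space M" and Xm[measurable]: "X \<in> borel_measurable M"
    and G: "gaussian_vec (distr M borel X) A" and Sp: "spd A"
  shows "integrable M (\<lambda>\<omega>. (t \<bullet> X \<omega>) ^ (2*k)) \<and>
         (LINT \<omega>|M. (t \<bullet> X \<omega>) ^ (2*k)) = fact (2 * k) / ((2 / (t \<bullet> (A *v t)))^k * fact k)"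
proof (cases "t = 0")
  case True
  interpret prob_space M by fact
  show ?thesis using True by (cases k) (auto simp: prob_space)
next
  case False
  define s where "s = sqrt (t \<bullet> (A *v t))"
  have pos: "t \<bullet> (A *v t) > 0" using Sp False by (simp add: spd_def)
  then have s: "s > 0" by (simp add: s_def)
  have ss: "s\<^sup>2 = t \<bullet> (A *v t)" using pos by (simp add: s_def)
  have D: "distributed (distr M borel X) lborel (\<lambda>x. t \<bullet> x) (\<lambda>y. ennreal (normal_density 0 s y))"
    using G False by (simp add: gaussian_vec_def s_def)
  have H: "has_bochner_integral lborel (\<lambda>x. normal_density 0 s x * x ^ (2 * k)) (fact (2 * k) / ((2 / s\<^sup>2)^k * fact k))"
    using normal_moment_even[OF s, of 0 k] by simp
  have I1: "integrable (distr M borel X) (\<lambda>x. (t \<bullet> x) ^ (2*k))"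
    using distributed_integrable[OF D, of "\<lambda>y. y ^ (2*k)"] H
    by (auto simp: normal_density_nonneg integrable.intros)
  have E1: "(LINT x|distr M borel X. (t \<bullet> x) ^ (2*k)) = fact (2 * k) / ((2 / s\<^sup>2)^k * fact k)"
    using distributed_integral[OF D, of "\<lambda>y. y ^ (2*k)"] H
    by (auto simp: normal_density_nonneg has_bochner_integral_integral_eq)
  show ?thesis using I1 E1 ss
    by (simp add: integrable_distr_eq integral_distr)
qed

context
  fixes M :: "'a measure" and X :: "'a \<Rightarrow> real^'n" and A :: "real^'n^'n"
  assumes P: "prob_space M" and Xm[measurable]: "X \<in> borel_measurable M"
    and G: "gaussian_vec (distr M borel X) A" and Sp: "spd A"
begin

lemma Asym: "a \<bullet> (A *v b) = b \<bullet> (A *v a)"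
proof -
  have T: "transpose A = A" using Sp by (simp add: spd_def)
  have "a \<bullet> (A *v b) = (a v* A) \<bullet> b" by (simp add: dot_lmul_matrix)
  also have "a v* A = A *v a" using vector_transpose_matrix[of a A] T by simp
  finally show ?thesis by (simp add: inner_commute)
qed

lemma E2: "integrable M (\<lambda>\<omega>. (t \<bullet> X \<omega>)^2)" "(LINT \<omega>|M. (t \<bullet> X \<omega>)^2) = t \<bullet> (A *v t)"
  using gauss_mom[OF P Xm G Sp, of t 1] by auto

lemma E4: "integrable M (\<lambda>\<omega>. (t \<bullet> X \<omega>)^4)" "(LINT \<omega>|M. (t \<bullet> X \<omega>)^4) = 3 * (t \<bullet> (A *v t))^2"
  using gauss_mom[OF P Xm G Sp, of t 2] by (auto simp: fact_numeral power2_eq_square)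

lemma C2: "integrable M (\<lambda>\<omega>. (a \<bullet> X \<omega>) * (b \<bullet> X \<omega>))" "(LINT \<omega>|M. (a \<bullet> X \<omega>) * (b \<bullet> X \<omega>)) = a \<bullet> (A *v b)"
proof -
  have eq: "(\<lambda>\<omega>. (a \<bullet> X \<omega>) * (b \<bullet> X \<omega>)) = (\<lambda>\<omega>. (((a+b) \<bullet> X \<omega>)^2 - ((a-b) \<bullet> X \<omega>)^2) / 4)"
    by (auto simp: inner_add_left inner_diff_left power2_eq_square field_simps)
  show "integrable M (\<lambda>\<omega>. (a \<bullet> X \<omega>) * (b \<bullet> X \<omega>))" unfolding eq using E2 by auto
  have s: "b \<bullet> (A *v a) = a \<bullet> (A *v b)" by (rule Asym)
  have "(LINT \<omega>|M. (a \<bullet> X \<omega>) * (b \<bullet> X \<omega>)) = ((a+b) \<bullet> (A *v (a+b)) - (a-b) \<bullet> (A *v (a-b))) / 4"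
    unfolding eq using E2(1) by (simp add: E2(2))
  also have "\<dots> = a \<bullet> (A *v b)"
    by (simp add: inner_add_left inner_diff_left inner_add_right inner_diff_right
      matrix_vector_right_distrib matrix_vector_mult_diff_distrib s)
  finally show "(LINT \<omega>|M. (a \<bullet> X \<omega>) * (b \<bullet> X \<omega>)) = a \<bullet> (A *v b)" .
qed

lemma C4: "integrable M (\<lambda>\<omega>. (v \<bullet> X \<omega>)^2 * (a \<bullet> X \<omega>) * (b \<bullet> X \<omega>))"
  "(LINT \<omega>|M. (v \<bullet> X \<omega>)^2 * (a \<bullet> X \<omega>) * (b \<bullet> X \<omega>)) =
     (v \<bullet> (A *v v)) * (a \<bullet> (A *v b)) + 2 * (v \<bullet> (A *v a)) * (v \<bullet> (A *v b))"
proof -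
  have pw: "(p::real)^2 * q * r = ((p+q+r)^4 + (p-q-r)^4 - (p+q-r)^4 - (p-q+r)^4 - 2*(q+r)^4 + 2*(q-r)^4) / 48" for p q r
    by (simp add: field_simps power_def numeral_eq_Suc)
  have eq: "(\<lambda>\<omega>. (v \<bullet> X \<omega>)^2 * (a \<bullet> X \<omega>) * (b \<bullet> X \<omega>)) = (\<lambda>\<omega>.
     (((v+a+b) \<bullet> X \<omega>)^4 + ((v-a-b) \<bullet> X \<omega>)^4 - ((v+a-b) \<bullet> X \<omega>)^4 - ((v-a+b) \<bullet> X \<omega>)^4
      - 2*((a+b) \<bullet> X \<omega>)^4 + 2*((a-b) \<bullet> X \<omega>)^4) / 48)"
    by (rule ext, subst pw) (simp add: inner_add_left inner_diff_left)
  show "integrable M (\<lambda>\<omega>. (v \<bullet> X \<omega>)^2 * (a \<bullet> X \<omega>) * (b \<bullet> X \<omega>))" unfolding eq using E4 by auto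
  have s: "a \<bullet> (A *v v) = v \<bullet> (A *v a)" "b \<bullet> (A *v v) = v \<bullet> (A *v b)" "b \<bullet> (A *v a) = a \<bullet> (A *v b)"
    by (rule Asym)+
  show "(LINT \<omega>|M. (v \<bullet> X \<omega>)^2 * (a \<bullet> X \<omega>) * (b \<bullet> X \<omega>)) =
     (v \<bullet> (A *v v)) * (a \<bullet> (A *v b)) + 2 * (v \<bullet> (A *v a)) * (v \<bullet> (A *v b))"
    unfolding eq using E4(1)
    apply (simp add: E4(2))
    apply (simp add: inner_add_left inner_diff_left inner_add_right inner_diff_right
      matrix_vector_right_distrib matrix_vector_mult_diff_distrib s)
    apply (simp add: field_simps power2_eq_square)
    done
qed

end

lemma bl_axis: "bounded_linear (axis i :: 'b::real_inner \<Rightarrow> 'b^'n)"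
proof (rule bounded_linear_intro[where K=1])
  show "axis i (x + y) = axis i x + axis i y" for x y :: 'b by (simp add: axis_def vec_eq_iff)
  show "axis i (r *\<^sub>R x) = r *\<^sub>R axis i x" for r and x :: 'b by (simp add: axis_def vec_eq_iff)
  show "norm (axis i x :: 'b^'n) \<le> norm x * 1" for x :: 'b
    by (simp add: norm_eq_sqrt_inner inner_axis_axis)
qed

lemma integrable_vec:
  fixes f :: "'a \<Rightarrow> 'b::euclidean_space^'n"
  assumes "\<And>i. integrable M (\<lambda>x. f x $ i)"
  shows "integrable M f"
proof -
  have "f = (\<lambda>x. \<Sum>i\<in>UNIV. axis i (f x $ i))"
    by (auto simp: vec_eq_iff axis_def fun_eq_iff if_distrib sum.delta cong: if_cong)
  moreover have "integrable M (\<lambda>x. \<Sum>i\<in>UNIV. axis i (f x $ i))"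
  proof -
    have "integrable M (\<lambda>x. axis i (f x $ i))" for i
      using integrable_bounded_linear[OF bl_axis assms] .
    then show ?thesis by simp
  qed
  ultimately show ?thesis by simp
qed

lemma integral_vec_nth:
  fixes f :: "'a \<Rightarrow> 'b::euclidean_space^'n"
  assumes "integrable M f"
  shows "(LINT x|M. f x) $ i = (LINT x|M. f x $ i)"
  using integral_bounded_linear[OF bounded_linear_vec_nth assms, of i] by simp

lemma outer_nth: "outer v w $ i $ j = v $ i * w $ j" by (simp add: outer_def)

lemma mat_outer_nth:
  fixes A :: "real^'n^'n"
  assumes "transpose A = A"
  shows "(A ** outer v v ** A) $ i $ j = (A *v v) $ i * (A *v v) $ j"
proof -
  have s: "A $ k $ j = A $ j $ k" for k j using assms by (metis transpose_def vec_lambda_beta)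
  show ?thesis
    by (simp add: matrix_matrix_mult_def matrix_vector_mult_def outer_def s sum_distrib_left
        sum_distrib_right mult_ac sum_product)
qed

lemma trace_outer:
  fixes A :: "real^'n^'n"
  shows "trace (A ** outer v v) = v \<bullet> (A *v v)"
  by (simp add: trace_def matrix_matrix_mult_def matrix_vector_mult_def outer_def inner_vec_def
      sum_distrib_left mult_ac)

lemma abs3_bound: "\<bar>(p::real) * q * r\<bar> \<le> 1 + p^4 + q^4 + r^4"
proof -
  have a: "2 * \<bar>p * q * r\<bar> \<le> (p*q)^2 + r^2"
  proof -
    have e: "(\<bar>p*q\<bar> - \<bar>r\<bar>)^2 = (p*q)^2 - 2*(\<bar>p*q\<bar>*\<bar>r\<bar>) + r^2"
      by (simp add: power2_diff)
    have "0 \<le> (\<bar>p*q\<bar> - \<bar>r\<bar>)^2" by simp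
    with e have "2*(\<bar>p*q\<bar>*\<bar>r\<bar>) \<le> (p*q)^2 + r^2" by linarith
    then show ?thesis by (simp add: abs_mult)
  qed
  have b: "2 * (p*q)^2 \<le> p^4 + q^4"
    using zero_le_square[of "p^2 - q^2"] by (simp add: power2_eq_square power4_eq_xxxx algebra_simps)
  have c0: "2*r^2 \<le> 1 + r^4"
    using zero_le_square[of "r^2 - 1"] by (simp add: power2_eq_square power4_eq_xxxx algebra_simps)
  have c: "r^2 \<le> 1 + r^4" using c0 zero_le_power2[of r] by linarith
  have d: "0 \<le> p^4" "0 \<le> q^4" by simp_all
  show ?thesis using a b c d by linarith
qed


context
  fixes M :: "'a measure" and X :: "'a \<Rightarrow> real^'n" and A :: "real^'n^'n"
    and Ep :: "'a \<Rightarrow> real" and \<sigma> :: real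
  assumes P: "prob_space M" and Xm[measurable]: "X \<in> borel_measurable M"
    and G: "gaussian_vec (distr M borel X) A" and Sp: "spd A"
    and Epm[measurable]: "Ep \<in> borel_measurable M"
    and Ind: "distr M (borel \<Otimes>\<^sub>M borel) (\<lambda>\<omega>. (X \<omega>, Ep \<omega>)) = distr M borel X \<Otimes>\<^sub>M distr M borel Ep"
    and Ep2i: "integrable M (\<lambda>\<omega>. (Ep \<omega>)\<^sup>2)"
    and E0: "prob_space.expectation M Ep = 0"
    and V: "prob_space.variance M Ep = \<sigma>\<^sup>2"
begin

definition phi :: "real \<Rightarrow> real^'n" where "phi e = (\<chi> i. e)"

lemma phi_meas[measurable]: "(phi :: real \<Rightarrow> real^'n) \<in> borel_measurable borel"
  unfolding phi_def by (intro borel_measurable_continuous_onI continuous_on_vec_lambda continuous_on_id)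

lemma IV: "prob_space.indep_var M borel X borel (\<lambda>\<omega>. (phi (Ep \<omega>) :: real^'n))"
proof -
  interpret prob_space M by (rule P)
  have sf: "sigma_finite_measure (distr (distr M borel Ep) borel (phi :: real \<Rightarrow> real^'n))"
    by (intro prob_space_imp_sigma_finite prob_space.prob_space_distr prob_space_distr) auto
  have "distr M borel X \<Otimes>\<^sub>M distr M borel (\<lambda>\<omega>. (phi (Ep \<omega>) :: real^'n))
      = distr (distr M borel X) borel id \<Otimes>\<^sub>M distr (distr M borel Ep) borel (phi :: real \<Rightarrow> real^'n)"
    by (simp add: distr_distr comp_def distr_id2 cong: distr_cong)
  also have "\<dots> = distr (distr M borel X \<Otimes>\<^sub>M distr M borel Ep) (borel \<Otimes>\<^sub>M borel) (\<lambda>(x, y). (id x, phi y))"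
    by (rule pair_measure_distr[OF _ _ sf]) auto
  also have "\<dots> = distr (distr M (borel \<Otimes>\<^sub>M borel) (\<lambda>\<omega>. (X \<omega>, Ep \<omega>))) (borel \<Otimes>\<^sub>M borel) (\<lambda>(x, y). (id x, phi y))"
    by (simp add: Ind)
  also have "\<dots> = distr M (borel \<Otimes>\<^sub>M borel) (\<lambda>\<omega>. (X \<omega>, phi (Ep \<omega>) :: real^'n))"
    by (subst distr_distr) (auto simp: comp_def)
  finally show ?thesis
    by (subst indep_var_distribution_eq) auto
qed

lemma EpI: "integrable M Ep"
proof -
  interpret prob_space M by (rule P)
  show ?thesis by (rule square_integrable_imp_integrable[OF Epm Ep2i])
qed

lemma Ep2: "(LINT \<omega>|M. (Ep \<omega>)\<^sup>2) = \<sigma>\<^sup>2"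
  using V E0 by simp

lemma indep_prod:
  fixes h :: "real^'n \<Rightarrow> real" and k :: "real \<Rightarrow> real"
  assumes [measurable]: "h \<in> borel_measurable borel" "k \<in> borel_measurable borel"
    and "integrable M (\<lambda>\<omega>. h (X \<omega>))" "integrable M (\<lambda>\<omega>. k (Ep \<omega>))"
  shows "integrable M (\<lambda>\<omega>. h (X \<omega>) * k (Ep \<omega>))"
    "(LINT \<omega>|M. h (X \<omega>) * k (Ep \<omega>)) = (LINT \<omega>|M. h (X \<omega>)) * (LINT \<omega>|M. k (Ep \<omega>))"
proof -
  interpret prob_space M by (rule P)
  have "indep_var borel (h \<circ> X) borel ((\<lambda>y. k (y $ undefined)) \<circ> (\<lambda>\<omega>. (phi (Ep \<omega>) :: real^'n)))"
    by (rule indep_var_compose[OF IV]) auto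
  then have "indep_var borel (h \<circ> X) borel (k \<circ> Ep)"
    by (simp add: comp_def phi_def)
  then show "integrable M (\<lambda>\<omega>. h (X \<omega>) * k (Ep \<omega>))"
    "(LINT \<omega>|M. h (X \<omega>) * k (Ep \<omega>)) = (LINT \<omega>|M. h (X \<omega>)) * (LINT \<omega>|M. k (Ep \<omega>))"
    using indep_var_lebesgue_integral indep_var_integrable assms by (auto simp: comp_def)
qed

lemma lin1: "integrable M (\<lambda>\<omega>. a \<bullet> X \<omega>)"
proof -
  interpret prob_space M by (rule P)
  show ?thesis by (rule square_integrable_imp_integrable) (auto intro: E2[OF P Xm G Sp])
qed

lemma lin3: "integrable M (\<lambda>\<omega>. (v \<bullet> X \<omega>) * (a \<bullet> X \<omega>) * (b \<bullet> X \<omega>))"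
proof -
  interpret prob_space M by (rule P)
  have i: "integrable M (\<lambda>\<omega>. 1 + (v \<bullet> X \<omega>)^4 + (a \<bullet> X \<omega>)^4 + (b \<bullet> X \<omega>)^4)"
    using E4[OF P Xm G Sp] by auto
  have m: "(\<lambda>\<omega>. (v \<bullet> X \<omega>) * (a \<bullet> X \<omega>) * (b \<bullet> X \<omega>)) \<in> borel_measurable M" by measurable
  have ae: "AE \<omega> in M. norm ((v \<bullet> X \<omega>) * (a \<bullet> X \<omega>) * (b \<bullet> X \<omega>))
     \<le> norm (1 + (v \<bullet> X \<omega>)^4 + (a \<bullet> X \<omega>)^4 + (b \<bullet> X \<omega>)^4)"
  proof (rule AE_I2)
    fix \<omega>
    have "0 \<le> (v \<bullet> X \<omega>)^4" "0 \<le> (a \<bullet> X \<omega>)^4" "0 \<le> (b \<bullet> X \<omega>)^4" by simp_all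
    then show "norm ((v \<bullet> X \<omega>) * (a \<bullet> X \<omega>) * (b \<bullet> X \<omega>))
     \<le> norm (1 + (v \<bullet> X \<omega>)^4 + (a \<bullet> X \<omega>)^4 + (b \<bullet> X \<omega>)^4)"
      using abs3_bound[of "v \<bullet> X \<omega>" "a \<bullet> X \<omega>" "b \<bullet> X \<omega>"] by simp
  qed
  show ?thesis by (rule Bochner_Integration.integrable_bound[OF i m ae])
qed


lemma g_nth: "grad_l u w x e $ i = ((w - u) \<bullet> x - e) * (axis i 1 \<bullet> x)"
  by (simp add: grad_l_def inner_diff_left inner_axis')

lemma Aaxis: "axis i 1 \<bullet> (A *v axis j 1) = A $ i $ j"
  by (simp add: matrix_vector_mult_basis inner_axis' column_def)

lemma NC: "noise_cov M X Ep u S w = (1 / S) *\<^sub>R (A ** outer (w - u) (w - u) ** A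
     + trace (A ** outer (w - u) (w - u)) *\<^sub>R A + \<sigma>\<^sup>2 *\<^sub>R A)"
proof -
  interpret prob_space M by (rule P)
  define v where "v = w - u"
  define g where "g = (\<lambda>\<omega>. grad_l u w (X \<omega>) (Ep \<omega>))"
  note E2' = E2[OF P Xm G Sp] and C2' = C2[OF P Xm G Sp] and C4' = C4[OF P Xm G Sp]
  have T: "transpose A = A" using Sp by (simp add: spd_def)
  have gi: "g \<omega> $ i = (v \<bullet> X \<omega> - Ep \<omega>) * (axis i 1 \<bullet> X \<omega>)" for \<omega> i
    by (simp add: g_def v_def g_nth)
  have Bva: "v \<bullet> (A *v axis i 1) = (A *v v) $ i" for i
    using Asym[OF P Xm G Sp, of v "axis i 1"] by (simp add: inner_axis')
  have I1: "integrable M (\<lambda>\<omega>. g \<omega> $ i)" and L1: "(LINT \<omega>|M. g \<omega> $ i) = (A *v v) $ i" for i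
  proof -
    have eq: "(\<lambda>\<omega>. g \<omega> $ i) = (\<lambda>\<omega>. (v \<bullet> X \<omega>) * (axis i 1 \<bullet> X \<omega>) - (axis i 1 \<bullet> X \<omega>) * Ep \<omega>)"
      by (auto simp: gi algebra_simps)
    have ie: "integrable M (\<lambda>\<omega>. (axis i 1 \<bullet> X \<omega>) * Ep \<omega>)"
      and le: "(LINT \<omega>|M. (axis i 1 \<bullet> X \<omega>) * Ep \<omega>) = (LINT \<omega>|M. axis i 1 \<bullet> X \<omega>) * (LINT \<omega>|M. Ep \<omega>)"
    proof -
      have m1: "(\<lambda>x. axis i 1 \<bullet> x :: real) \<in> borel_measurable (borel :: (real^'n) measure)" by measurable
      have m2: "(\<lambda>e. e :: real) \<in> borel_measurable borel" by measurable
      show "integrable M (\<lambda>\<omega>. (axis i 1 \<bullet> X \<omega>) * Ep \<omega>)"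
        "(LINT \<omega>|M. (axis i 1 \<bullet> X \<omega>) * Ep \<omega>) = (LINT \<omega>|M. axis i 1 \<bullet> X \<omega>) * (LINT \<omega>|M. Ep \<omega>)"
        using indep_prod[OF m1 m2 lin1 EpI] by blast+
    qed
    show "integrable M (\<lambda>\<omega>. g \<omega> $ i)" unfolding eq using ie C2'(1) by auto
    show "(LINT \<omega>|M. g \<omega> $ i) = (A *v v) $ i" unfolding eq using ie C2'(1)
      by (simp add: C2'(2) le E0 Bva)
  qed
  have I2: "integrable M (\<lambda>\<omega>. outer (g \<omega>) (g \<omega>) $ i $ j)"
    and L2: "(LINT \<omega>|M. outer (g \<omega>) (g \<omega>) $ i $ j) =
       (v \<bullet> (A *v v)) * A $ i $ j + 2 * ((A *v v) $ i * (A *v v) $ j) + \<sigma>\<^sup>2 * A $ i $ j" for i j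
  proof -
    let ?p = "\<lambda>\<omega>. v \<bullet> X \<omega>" and ?q = "\<lambda>\<omega>. axis i 1 \<bullet> X \<omega>" and ?r = "\<lambda>\<omega>. axis j 1 \<bullet> X \<omega>"
    have eq: "(\<lambda>\<omega>. outer (g \<omega>) (g \<omega>) $ i $ j) = (\<lambda>\<omega>. (?p \<omega>)^2 * ?q \<omega> * ?r \<omega>
       - 2 * ((?p \<omega> * ?q \<omega> * ?r \<omega>) * Ep \<omega>) + (?q \<omega> * ?r \<omega>) * (Ep \<omega>)^2)"
      unfolding outer_nth gi power2_eq_square by (rule ext) algebra
    have i3: "integrable M (\<lambda>\<omega>. ?p \<omega> * ?q \<omega> * ?r \<omega>)" by (rule lin3)
    have ia: "integrable M (\<lambda>\<omega>. (?p \<omega> * ?q \<omega> * ?r \<omega>) * Ep \<omega>)"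
      and la: "(LINT \<omega>|M. (?p \<omega> * ?q \<omega> * ?r \<omega>) * Ep \<omega>) = (LINT \<omega>|M. ?p \<omega> * ?q \<omega> * ?r \<omega>) * (LINT \<omega>|M. Ep \<omega>)"
    proof -
      have m1: "(\<lambda>x. (v \<bullet> x) * (axis i 1 \<bullet> x) * (axis j 1 \<bullet> x) :: real) \<in> borel_measurable (borel :: (real^'n) measure)" by measurable
      have m2: "(\<lambda>e. e :: real) \<in> borel_measurable borel" by measurable
      show "integrable M (\<lambda>\<omega>. (?p \<omega> * ?q \<omega> * ?r \<omega>) * Ep \<omega>)"
        "(LINT \<omega>|M. (?p \<omega> * ?q \<omega> * ?r \<omega>) * Ep \<omega>) = (LINT \<omega>|M. ?p \<omega> * ?q \<omega> * ?r \<omega>) * (LINT \<omega>|M. Ep \<omega>)"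
        using indep_prod[OF m1 m2 i3 EpI] by blast+
    qed
    have ib: "integrable M (\<lambda>\<omega>. (?q \<omega> * ?r \<omega>) * (Ep \<omega>)^2)"
      and lb: "(LINT \<omega>|M. (?q \<omega> * ?r \<omega>) * (Ep \<omega>)^2) = (LINT \<omega>|M. ?q \<omega> * ?r \<omega>) * (LINT \<omega>|M. (Ep \<omega>)^2)"
    proof -
      have m1: "(\<lambda>x. (axis i 1 \<bullet> x) * (axis j 1 \<bullet> x) :: real) \<in> borel_measurable (borel :: (real^'n) measure)" by measurable
      have m2: "(\<lambda>e. e^2 :: real) \<in> borel_measurable borel" by measurable
      show "integrable M (\<lambda>\<omega>. (?q \<omega> * ?r \<omega>) * (Ep \<omega>)^2)"
        "(LINT \<omega>|M. (?q \<omega> * ?r \<omega>) * (Ep \<omega>)^2) = (LINT \<omega>|M. ?q \<omega> * ?r \<omega>) * (LINT \<omega>|M. (Ep \<omega>)^2)"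
        using indep_prod[OF m1 m2 C2'(1) Ep2i] by blast+
    qed
    show "integrable M (\<lambda>\<omega>. outer (g \<omega>) (g \<omega>) $ i $ j)" unfolding eq using C4'(1) ia ib by auto
    show "(LINT \<omega>|M. outer (g \<omega>) (g \<omega>) $ i $ j) =
       (v \<bullet> (A *v v)) * A $ i $ j + 2 * ((A *v v) $ i * (A *v v) $ j) + \<sigma>\<^sup>2 * A $ i $ j"
      unfolding eq using C4'(1) ia ib
      by (simp add: C4'(2) la lb E0 Ep2 C2'(2) Aaxis Bva)
  qed
  have Ig: "integrable M g" by (rule integrable_vec) (rule I1)
  have Igg: "integrable M (\<lambda>\<omega>. outer (g \<omega>) (g \<omega>))"
    by (rule integrable_vec, rule integrable_vec) (rule I2)
  have "noise_cov M X Ep u S w $ i $ j = ((1 / S) *\<^sub>R (A ** outer v v ** A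
     + trace (A ** outer v v) *\<^sub>R A + \<sigma>\<^sup>2 *\<^sub>R A)) $ i $ j" for i j
  proof -
    have r: "integrable M (\<lambda>\<omega>. outer (g \<omega>) (g \<omega>) $ i)" by (rule integrable_vec) (rule I2)
    have e1: "(LINT \<omega>|M. outer (g \<omega>) (g \<omega>)) $ i $ j = (LINT \<omega>|M. outer (g \<omega>) (g \<omega>) $ i $ j)"
      using integral_vec_nth[OF Igg, of i] integral_vec_nth[OF r, of j] by simp
    have e2: "(LINT \<omega>|M. g \<omega>) $ k = (A *v v) $ k" for k
      using integral_vec_nth[OF Ig, of k] L1[of k] by simp
    have nc: "noise_cov M X Ep u S w = (1/S) *\<^sub>R ((LINT \<omega>|M. outer (g \<omega>) (g \<omega>))
        - outer (LINT \<omega>|M. g \<omega>) (LINT \<omega>|M. g \<omega>))"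
      by (simp add: noise_cov_def g_def)
    have lhs: "noise_cov M X Ep u S w $ i $ j = (1/S) * (((v \<bullet> (A *v v)) * A $ i $ j + 2 * ((A *v v) $ i * (A *v v) $ j) + \<sigma>\<^sup>2 * A $ i $ j)
        - (A *v v) $ i * (A *v v) $ j)"
      using L2[of i j] by (simp add: nc e1 e2 outer_nth)
    have rhs: "((1 / S) *\<^sub>R (A ** outer v v ** A
     + trace (A ** outer v v) *\<^sub>R A + \<sigma>\<^sup>2 *\<^sub>R A)) $ i $ j = (1/S) * ((A *v v) $ i * (A *v v) $ j + (v \<bullet> (A *v v)) * A $ i $ j + \<sigma>\<^sup>2 * A $ i $ j)"
      by (simp add: mat_outer_nth[OF T] trace_outer)
    show ?thesis unfolding lhs rhs by (simp add: algebra_simps)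
  qed
  then show ?thesis by (simp add: vec_eq_iff v_def)
qed

end

lemma Lmap_bl:
  fixes A :: "real^'n^'n" and c :: real
  shows "bounded_linear (\<lambda>\<Sigma>::real^'n^'n. c *\<^sub>R (A ** \<Sigma> ** A + trace (A ** \<Sigma>) *\<^sub>R A))"
proof -
  have "linear (\<lambda>\<Sigma>::real^'n^'n. c *\<^sub>R (A ** \<Sigma> ** A + trace (A ** \<Sigma>) *\<^sub>R A))"
  proof (rule linearI)
    fix x y :: "real^'n^'n" and r :: real
    show "c *\<^sub>R (A ** (x + y) ** A + trace (A ** (x + y)) *\<^sub>R A) =
       c *\<^sub>R (A ** x ** A + trace (A ** x) *\<^sub>R A) + c *\<^sub>R (A ** y ** A + trace (A ** y) *\<^sub>R A)"
      by (simp add: vec_eq_iff matrix_matrix_mult_def trace_def sum.distrib algebra_simps)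
    show "c *\<^sub>R (A ** (r *\<^sub>R x) ** A + trace (A ** (r *\<^sub>R x)) *\<^sub>R A) =
       r *\<^sub>R (c *\<^sub>R (A ** x ** A + trace (A ** x) *\<^sub>R A))"
      by (simp add: vec_eq_iff matrix_matrix_mult_def trace_def sum_distrib_left algebra_simps)
  qed
  then show ?thesis by (simp add: linear_conv_bounded_linear)
qed

lemma outer_integrable:
  fixes W :: "(real^'n) measure"
  assumes "prob_space W" and sW: "sets W = sets borel"
    and "integrable W (\<lambda>w. (norm w)\<^sup>2)"
  shows "integrable W (\<lambda>w. outer (w - u) (w - u))"
proof -
  interpret prob_space W by fact
  have ij: "integrable W (\<lambda>w. (w - u) $ i * (w - u) $ j)" for i j
  proof -
    have i: "integrable W (\<lambda>w. 2 * (norm w)\<^sup>2 + 2 * (norm u)\<^sup>2)" using assms(3) by auto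
    have mb: "(\<lambda>w. (w - u) $ i * (w - u) $ j) \<in> borel_measurable (borel :: (real^'n) measure)"
      by (intro borel_measurable_continuous_onI continuous_intros)
    have m: "(\<lambda>w. (w - u) $ i * (w - u) $ j) \<in> borel_measurable W"
      by (subst measurable_cong_sets[OF sW refl]) (rule mb)
    have ae: "AE w in W. norm ((w - u) $ i * (w - u) $ j) \<le> norm (2 * (norm w)\<^sup>2 + 2 * (norm u)\<^sup>2)"
    proof (rule AE_I2)
      fix w :: "real^'n"
      have a: "\<bar>(w - u) $ i\<bar> \<le> norm (w - u)" "\<bar>(w - u) $ j\<bar> \<le> norm (w - u)"
        by (rule component_le_norm_cart)+
      have b: "\<bar>(w - u) $ i * (w - u) $ j\<bar> \<le> norm (w - u) * norm (w - u)"
        unfolding abs_mult by (rule mult_mono[OF a]) auto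
      have c: "norm (w - u) \<le> norm w + norm u" by (rule norm_triangle_ineq4)
      have d: "norm (w - u) * norm (w - u) \<le> (norm w + norm u) * (norm w + norm u)"
        by (rule mult_mono[OF c c]) auto
      have e: "(norm w + norm u) * (norm w + norm u) \<le> 2 * (norm w)\<^sup>2 + 2 * (norm u)\<^sup>2"
        using zero_le_square[of "norm w - norm u"] by (simp add: power2_eq_square algebra_simps)
      show "norm ((w - u) $ i * (w - u) $ j) \<le> norm (2 * (norm w)\<^sup>2 + 2 * (norm u)\<^sup>2)"
        using b d e by simp
    qed
    show ?thesis by (rule Bochner_Integration.integrable_bound[OF i m ae])
  qed
  show ?thesis
    by (rule integrable_vec, rule integrable_vec) (unfold outer_nth, rule ij)
qed

theorem lemma1:
  fixes M :: "'a measure"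
    and X :: "'a \<Rightarrow> real^'n" and Ep :: "'a \<Rightarrow> real"
    and A :: "real^'n^'n" and u :: "real^'n" and \<sigma> :: real and S :: nat
    and W :: "(real^'n) measure"
  assumes "prob_space M"
    and "spd A"
    and "X \<in> borel_measurable M"
    and "Ep \<in> borel_measurable M"
    and "gaussian_vec (distr M borel X) A"
    and "distr M (borel \<Otimes>\<^sub>M borel) (\<lambda>\<omega>. (X \<omega>, Ep \<omega>)) = distr M borel X \<Otimes>\<^sub>M distr M borel Ep"
    and "integrable M (\<lambda>\<omega>. (Ep \<omega>)\<^sup>2)"
    and "prob_space.expectation M Ep = 0"
    and "prob_space.variance M Ep = \<sigma>\<^sup>2"
    and "S > 0"
    and "prob_space W" and "sets W = sets borel"
    and "integrable W (\<lambda>w. (norm w)\<^sup>2)"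
  shows "(LINT w|W. noise_cov M X Ep u (real S) w)
       = (1 / real S) *\<^sub>R
           (A ** (LINT w|W. outer (w - u) (w - u)) ** A
            + trace (A ** (LINT w|W. outer (w - u) (w - u))) *\<^sub>R A
            + \<sigma>\<^sup>2 *\<^sub>R A)"
proof -
  interpret W: prob_space W by fact
  define L where "L = (\<lambda>\<Sigma>::real^'n^'n. (1 / real S) *\<^sub>R (A ** \<Sigma> ** A + trace (A ** \<Sigma>) *\<^sub>R A))"
  define c where "c = (1 / real S) *\<^sub>R (\<sigma>\<^sup>2 *\<^sub>R A)"
  have bl: "bounded_linear L" unfolding L_def by (rule Lmap_bl)
  have oi: "integrable W (\<lambda>w. outer (w - u) (w - u))"
    by (rule outer_integrable[OF assms(11,12,13)])
  have pw: "noise_cov M X Ep u (real S) w = L (outer (w - u) (w - u)) + c" for w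
    using NC[OF assms(1,3,5,2,4,6,7,8,9), of u "real S" w]
    by (simp add: L_def c_def scaleR_add_right)
  have "(LINT w|W. noise_cov M X Ep u (real S) w) = (LINT w|W. L (outer (w - u) (w - u)) + c)"
    by (simp add: pw)
  also have "\<dots> = (LINT w|W. L (outer (w - u) (w - u))) + (LINT w|W. c)"
    by (rule Bochner_Integration.integral_add[OF integrable_bounded_linear[OF bl oi]]) simp
  also have "\<dots> = L (LINT w|W. outer (w - u) (w - u)) + c"
    by (simp add: integral_bounded_linear[OF bl oi] W.prob_space)
  also have "\<dots> = (1 / real S) *\<^sub>R
           (A ** (LINT w|W. outer (w - u) (w - u)) ** A
            + trace (A ** (LINT w|W. outer (w - u) (w - u))) *\<^sub>R A
            + \<sigma>\<^sup>2 *\<^sub>R A)"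
    by (simp add: L_def c_def scaleR_add_right)
  finally show ?thesis .
qed

end
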